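(* Let $k$ be a positive integer. (1) If $k$ is even, each vertex of $\mathcal F_k$ has at most one predecessor. (2) If $k$ is odd, each vertex of $\mathcal F_k$ has at most two predecessors, and if a vertex $p/q$ has two predecessors $a_1/b_1$ and $a_2/b_2$, then $a_1/b_1$ and $a_2/b_2$ are adjacent in $\mathcal F_k$.
   Context: The vertex set $V$ consists of all reduced fractions $p/q$ with $p,q\in\mathbb Z$, $\gcd(p,q)=1$, together with $1/0$; here $p/q$ and $(-p)/(-q)$ denote the same vertex. For vertices define $d(p/q,a/b)=|pb-qa|$. The graph $\mathcal F_k$ has vertex set $V$, with an edge between $p/q$ and $a/b$ exactly when $d(p/q,a/b)=k$. Write $a/b\prec p/q$ when $a/b$ and $p/q$ are adjacent in $\mathcal F_k$ and $|a|\le|p|$ and $|b|\le|q|$; in that case $a/b$ is called a predecessor of $p/q$. *)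

theory Defs
  imports Main
begin

text \<open>A vertex p/q is represented by an integer pair (p,q) with gcd p q = 1
  (this includes 1/0 as (1,0) or (-1,0)); the pairs (p,q) and (-p,-q)
  represent the same vertex.\<close>

definition is_vertex :: "int \<times> int \<Rightarrow> bool" where
  "is_vertex v \<longleftrightarrow> coprime (fst v) (snd v)"

definition same_vertex :: "int \<times> int \<Rightarrow> int \<times> int \<Rightarrow> bool" where
  "same_vertex v w \<longleftrightarrow> w = v \<or> w = (- fst v, - snd v)"

definition fdist :: "int \<times> int \<Rightarrow> int \<times> int \<Rightarrow> int" where
  "fdist v w = \<bar>fst v * snd w - snd v * fst w\<bar>"

definition adjF :: "nat \<Rightarrow> int \<times> int \<Rightarrow> int \<times> int \<Rightarrow> bool" where
  "adjF k v w \<longleftrightarrow> is_vertex v \<and> is_vertex w \<and> fdist v w = int k"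

definition predF :: "nat \<Rightarrow> int \<times> int \<Rightarrow> int \<times> int \<Rightarrow> bool" where
  "predF k w v \<longleftrightarrow> adjF k w v \<and> \<bar>fst w\<bar> \<le> \<bar>fst v\<bar> \<and> \<bar>snd w\<bar> \<le> \<bar>snd v\<bar>"

end

theory Submission
  imports Defs
begin

lemma diff_mult:
  fixes p q a b a' b' :: int
  assumes "coprime p q" "p \<noteq> 0" "a*q - b*p = a'*q - b'*p"
  shows "\<exists>t. a' = a + t*p \<and> b' = b + t*q"
proof -
  have e: "p*(b'-b) = q*(a'-a)" using assms(3) by (simp add: algebra_simps)
  have "p dvd q*(a'-a)" using e by (metis dvd_triv_left)
  hence "p dvd (a'-a)" using assms(1) by (simp add: coprime_dvd_mult_right_iff)
  then obtain t where t: "a'-a = p*t" by (auto elim: dvdE)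
  have "p*(b'-b) = p*(t*q)" using e t by (simp add: algebra_simps)
  hence "b'-b = t*q" using assms(2) by simp
  thus ?thesis using t by (intro exI[of _ t]) (simp add: algebra_simps)
qed

lemma two_lem:
  fixes a p :: int
  assumes "\<bar>a\<bar> \<le> \<bar>p\<bar>" "\<bar>a + 2*p\<bar> \<le> \<bar>p\<bar>"
  shows "a = -p"
  using assms by (cases "p \<ge> 0") (simp_all add: abs_le_iff)

lemma two_lem':
  fixes a p :: int
  assumes "\<bar>a\<bar> \<le> \<bar>p\<bar>" "\<bar>a + (-2)*p\<bar> \<le> \<bar>p\<bar>"
  shows "a = p"
  using assms by (cases "p \<ge> 0") (simp_all add: abs_le_iff)

lemma key:
  fixes p q a b a' b' :: int
  assumes "coprime p q" "p \<noteq> 0" "a*q - b*p = int k" "a'*q - b'*p = int k" "k > 0"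
    "\<bar>a\<bar> \<le> \<bar>p\<bar>" "\<bar>a'\<bar> \<le> \<bar>p\<bar>" "\<bar>b\<bar> \<le> \<bar>q\<bar>" "\<bar>b'\<bar> \<le> \<bar>q\<bar>" "(a,b) \<noteq> (a',b')"
  shows "\<exists>t. (t = 1 \<or> t = -1) \<and> a' = a + t*p \<and> b' = b + t*q"
proof -
  obtain t where t: "a' = a + t*p" "b' = b + t*q"
    using diff_mult[OF assms(1,2), of a b a' b'] assms(3,4) by auto
  have "t \<noteq> 0" using t assms(10) by auto
  have "\<bar>t\<bar> * \<bar>p\<bar> = \<bar>a' - a\<bar>" using t by (simp add: abs_mult)
  also have "\<dots> \<le> \<bar>a'\<bar> + \<bar>a\<bar>" by (rule abs_triangle_ineq4)
  also have "\<dots> \<le> 2*\<bar>p\<bar>" using assms(6,7) by linarith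
  finally have "\<bar>t\<bar> \<le> 2" using assms(2) by simp
  moreover have "t \<noteq> 2"
  proof
    assume "t = 2"
    hence "a = -p" "b = -q" using t assms(6-9) two_lem[of a p] two_lem[of b q] by simp_all
    thus False using assms(3,5) by (simp add: algebra_simps)
  qed
  moreover have "t \<noteq> -2"
  proof
    assume "t = -2"
    hence "a = p" "b = q" using t assms(6-9) two_lem'[of a p] two_lem'[of b q] by simp_all
    thus False using assms(3,5) by (simp add: algebra_simps)
  qed
  ultimately have "t = 1 \<or> t = -1" using \<open>t \<noteq> 0\<close> by linarith
  thus ?thesis using t by blast
qed

lemma rep:
  assumes "predF k w v" "k > 0" "is_vertex v"
  shows "\<exists>r. same_vertex w r \<and> fst r * snd v - snd r * fst v = int k
    \<and> \<bar>fst r\<bar> \<le> \<bar>fst v\<bar> \<and> \<bar>snd r\<bar> \<le> \<bar>snd v\<bar> \<and> coprime (fst r) (snd r)"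
proof -
  obtain a b where w: "w = (a,b)" by force
  have h: "\<bar>a * snd v - b * fst v\<bar> = int k" "\<bar>a\<bar> \<le> \<bar>fst v\<bar>" "\<bar>b\<bar> \<le> \<bar>snd v\<bar>" "coprime a b"
    using assms(1) by (auto simp: predF_def adjF_def fdist_def is_vertex_def w)
  show ?thesis
  proof (cases "a * snd v - b * fst v = int k")
    case True
    thus ?thesis using h by (intro exI[of _ "(a,b)"]) (auto simp: same_vertex_def w)
  next
    case False
    hence "-(a * snd v - b * fst v) = int k" using h(1) by (auto simp: abs_if split: if_splits)
    hence "(-a) * snd v - (-b) * fst v = int k" by simp
    thus ?thesis using h by (intro exI[of _ "(-a,-b)"]) (auto simp: same_vertex_def w)
  qed
qed

lemma nonzero:
  assumes "predF k w v" "k > 0" "is_vertex v"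
  shows "fst v \<noteq> 0 \<and> snd v \<noteq> 0"
proof -
  obtain a b where w: "w = (a,b)" by force
  obtain p q where v: "v = (p,q)" by force
  have h: "\<bar>a * q - b * p\<bar> = int k" "\<bar>a\<bar> \<le> \<bar>p\<bar>" "\<bar>b\<bar> \<le> \<bar>q\<bar>" "coprime a b" "coprime p q"
    using assms(1,3) by (auto simp: predF_def adjF_def fdist_def is_vertex_def w v)
  show ?thesis
  proof (rule ccontr)
    assume "\<not> ?thesis"
    hence "p = 0 \<or> q = 0" using v by auto
    thus False
    proof
      assume "p = 0" hence "a = 0" using h by simp
      thus False using h \<open>p = 0\<close> assms(2) by simp
    next
      assume "q = 0" hence "b = 0" using h by simp
      thus False using h \<open>q = 0\<close> assms(2) by simp
    qed
  qed
qed

lemma sv_sym: "same_vertex w r \<Longrightarrow> same_vertex r w"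
  by (cases w; cases r) (auto simp: same_vertex_def)

lemma sv_trans: "same_vertex w r \<Longrightarrow> same_vertex r u \<Longrightarrow> same_vertex w u"
  by (cases w; cases r; cases u) (auto simp: same_vertex_def)

lemma sv_vertex: "same_vertex w r \<Longrightarrow> is_vertex r \<Longrightarrow> is_vertex w"
  by (cases w; cases r) (auto simp: same_vertex_def is_vertex_def)

lemma sv_fdist: "same_vertex w r \<Longrightarrow> same_vertex w' r' \<Longrightarrow> fdist w w' = fdist r r'"
  by (cases w; cases r; cases w'; cases r') (auto simp: same_vertex_def fdist_def algebra_simps abs_minus_commute)

lemma two_reps:
  assumes "predF k w1 v" "predF k w2 v" "k > 0" "is_vertex v"
  shows "same_vertex w1 w2 \<or> (\<exists>a b t. (t = 1 \<or> t = -1) \<and> same_vertex w1 (a,b)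
     \<and> same_vertex w2 (a + t * fst v, b + t * snd v) \<and> a * snd v - b * fst v = int k
     \<and> coprime a b \<and> coprime (a + t * fst v) (b + t * snd v))"
proof -
  obtain r1 where r1: "same_vertex w1 r1" "fst r1 * snd v - snd r1 * fst v = int k"
    "\<bar>fst r1\<bar> \<le> \<bar>fst v\<bar>" "\<bar>snd r1\<bar> \<le> \<bar>snd v\<bar>" "coprime (fst r1) (snd r1)"
    using rep[OF assms(1,3,4)] by blast
  obtain r2 where r2: "same_vertex w2 r2" "fst r2 * snd v - snd r2 * fst v = int k"
    "\<bar>fst r2\<bar> \<le> \<bar>fst v\<bar>" "\<bar>snd r2\<bar> \<le> \<bar>snd v\<bar>" "coprime (fst r2) (snd r2)"
    using rep[OF assms(2,3,4)] by blast
  show ?thesis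
  proof (cases "r1 = r2")
    case True
    thus ?thesis using r1(1) r2(1) sv_sym sv_trans by blast
  next
    case False
    have "fst v \<noteq> 0" using nonzero[OF assms(1,3,4)] by simp
    moreover have "coprime (fst v) (snd v)" using assms(4) by (simp add: is_vertex_def)
    ultimately obtain t where "(t = 1 \<or> t = -1)" "fst r2 = fst r1 + t * fst v"
       "snd r2 = snd r1 + t * snd v"
      using key[of "fst v" "snd v" "fst r1" "snd r1" k "fst r2" "snd r2"] r1 r2 False assms(3)
      by (metis prod.collapse)
    thus ?thesis using r1 r2
      by (intro disjI2 exI[of _ "fst r1"] exI[of _ "snd r1"] exI[of _ t]) (metis prod.collapse)
  qed
qed


lemma parity:
  fixes p q a b t :: int
  assumes "coprime p q" "coprime a b" "coprime (a + t*p) (b + t*q)" "t = 1 \<or> t = -1"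
    "a*q - b*p = int k"
  shows "odd k"
proof (rule ccontr)
  assume ev: "\<not> odd k"
  have ev2: "even (a*q - b*p)" using ev assms(5) by simp
  have odt: "odd t" using assms(4) by auto
  have np: "\<not> (even a \<and> even b)" using assms(2) by (metis coprime_common_divisor dvd_refl odd_one)
  have np2: "\<not> (even (a+t*p) \<and> even (b+t*q))" using assms(3)
    by (metis coprime_common_divisor dvd_refl odd_one)
  have npq: "\<not> (even p \<and> even q)" using assms(1) by (metis coprime_common_divisor dvd_refl odd_one)
  show False
    using ev2 np np2 npq odt by auto
qed

theorem lemma4p6:
  fixes k :: nat
  assumes "k > 0"
  shows "(even k \<longrightarrow>
           (\<forall>v w1 w2. is_vertex v \<and> predF k w1 v \<and> predF k w2 v
              \<longrightarrow> same_vertex w1 w2))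
       \<and> (odd k \<longrightarrow>
           (\<forall>v w1 w2 w3. is_vertex v \<and> predF k w1 v \<and> predF k w2 v \<and> predF k w3 v
              \<longrightarrow> same_vertex w1 w2 \<or> same_vertex w1 w3 \<or> same_vertex w2 w3)
         \<and> (\<forall>v w1 w2. is_vertex v \<and> predF k w1 v \<and> predF k w2 v
              \<and> \<not> same_vertex w1 w2 \<longrightarrow> adjF k w1 w2))"
proof (intro conjI impI allI)
  fix v w1 w2
  assume ev: "even k" and h: "is_vertex v \<and> predF k w1 v \<and> predF k w2 v"
  show "same_vertex w1 w2"
  proof (rule ccontr)
    assume "\<not> same_vertex w1 w2"
    then obtain a b t where "(t = 1 \<or> t = -1)" "a * snd v - b * fst v = int k"
     "coprime a b" "coprime (a + t * fst v) (b + t * snd v)"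
      using two_reps[of k w1 v w2] h assms by blast
    moreover have "coprime (fst v) (snd v)" using h by (simp add: is_vertex_def)
    ultimately have "odd k" using parity by blast
    thus False using ev by simp
  qed
next
  fix v w1 w2
  assume od: "odd k" and h: "is_vertex v \<and> predF k w1 v \<and> predF k w2 v \<and> \<not> same_vertex w1 w2"
  then obtain a b t where ab: "(t = 1 \<or> t = -1)" "same_vertex w1 (a,b)"
     "same_vertex w2 (a + t * fst v, b + t * snd v)" "a * snd v - b * fst v = int k"
      using two_reps[of k w1 v w2] assms by blast
  have "fdist w1 w2 = fdist (a,b) (a + t * fst v, b + t * snd v)" using ab sv_fdist by blast
  also have "\<dots> = \<bar>t * (a * snd v - b * fst v)\<bar>" by (simp add: fdist_def algebra_simps)
  also have "\<dots> = int k" using ab by (auto simp: abs_mult)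
  finally show "adjF k w1 w2" using h by (simp add: adjF_def predF_def)
next
  fix v w1 w2 w3
  assume od: "odd k" and h: "is_vertex v \<and> predF k w1 v \<and> predF k w2 v \<and> predF k w3 v"
  obtain r1 where r1: "same_vertex w1 r1" "fst r1 * snd v - snd r1 * fst v = int k"
    "\<bar>fst r1\<bar> \<le> \<bar>fst v\<bar>" "\<bar>snd r1\<bar> \<le> \<bar>snd v\<bar>" "coprime (fst r1) (snd r1)"
    using rep[of k w1 v] h assms by blast
  obtain r2 where r2: "same_vertex w2 r2" "fst r2 * snd v - snd r2 * fst v = int k"
    "\<bar>fst r2\<bar> \<le> \<bar>fst v\<bar>" "\<bar>snd r2\<bar> \<le> \<bar>snd v\<bar>" "coprime (fst r2) (snd r2)"
    using rep[of k w2 v] h assms by blast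
  obtain r3 where r3: "same_vertex w3 r3" "fst r3 * snd v - snd r3 * fst v = int k"
    "\<bar>fst r3\<bar> \<le> \<bar>fst v\<bar>" "\<bar>snd r3\<bar> \<le> \<bar>snd v\<bar>" "coprime (fst r3) (snd r3)"
    using rep[of k w3 v] h assms by blast
  have nz: "fst v \<noteq> 0" using nonzero[of k w1 v] h assms by simp
  have cp: "coprime (fst v) (snd v)" using h by (simp add: is_vertex_def)
  show "same_vertex w1 w2 \<or> same_vertex w1 w3 \<or> same_vertex w2 w3"
  proof (rule ccontr)
    assume nn: "\<not> ?thesis"
    have "r1 \<noteq> r2" using nn r1(1) r2(1) sv_sym sv_trans by blast
    then obtain t where t: "(t = 1 \<or> t = -1)" "fst r2 = fst r1 + t * fst v"
       "snd r2 = snd r1 + t * snd v"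
      using key[of "fst v" "snd v" "fst r1" "snd r1" k "fst r2" "snd r2"] r1 r2 assms nz cp
      by (metis prod.collapse)
    have "r1 \<noteq> r3" using nn r1(1) r3(1) sv_sym sv_trans by blast
    then obtain s where s: "(s = 1 \<or> s = -1)" "fst r3 = fst r1 + s * fst v"
       "snd r3 = snd r1 + s * snd v"
      using key[of "fst v" "snd v" "fst r1" "snd r1" k "fst r3" "snd r3"] r1 r3 assms nz cp
      by (metis prod.collapse)
    have "r2 \<noteq> r3" using nn r2(1) r3(1) sv_sym sv_trans by blast
    then obtain u where u: "(u = 1 \<or> u = -1)" "fst r3 = fst r2 + u * fst v"
      using key[of "fst v" "snd v" "fst r2" "snd r2" k "fst r3" "snd r3"] r2 r3 assms nz cp
      by (metis prod.collapse)
    have "s * fst v = (t + u) * fst v" using t s u by (simp add: algebra_simps)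
    hence "s = t + u" using nz by simp
    thus False using s t u by auto
  qed
qed

end
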